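(* Let $R$ be a ring, $S\in\mathrm{maxDen}_l(R)$, $A=S^{-1}R$ with group of units $A^*$, $\mathfrak a:=\mathrm{ass}(S)$, $\pi_{\mathfrak a}:R\to R/\mathfrak a$, $a\mapsto a+\mathfrak a$, and $\sigma_{\mathfrak a}:R\to A$, $r\mapsto r/1$ (so $R/\mathfrak a$ is identified with $\sigma_{\mathfrak a}(R)\subseteq A$). Then: (1) $S=S_{\mathfrak a}(R)$, $S=\pi_{\mathfrak a}^{-1}(S_0(R/\mathfrak a))$, $\pi_{\mathfrak a}(S)=S_0(R/\mathfrak a)$ and $A\cong S_0(R/\mathfrak a)^{-1}(R/\mathfrak a)=Q_l(R/\mathfrak a)$; (2) $S_0(A)=A^*$ and $S_0(A)\cap (R/\mathfrak a)=S_0(R/\mathfrak a)$; (3) $S=\sigma_{\mathfrak a}^{-1}(A^* )$; (4) $A^*$ is the group generated by $\sigma_{\mathfrak a}(S)$ and $\{\sigma_{\mathfrak a}(s)^{-1}\mid s\in S\}$; (5) $A^*=\{\sigma_{\mathfrak a}(s)^{-1}\sigma_{\mathfrak a}(t)\mid s,t\in S\}$; (6) $Q_l(A)=A$ and $\mathrm{Ass}_l(A)=\{0\}$; in particular, every $T\in\mathrm{Den}_l(A,0)$ satisfies $T\subseteq A^*$.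
   Context: Rings are associative with $1$. A multiplicatively closed subset $S$ ($1\in S$, $0\notin S$) is a left Ore set if $Sr\cap Rs\ne\emptyset$ for all $r\in R,s\in S$; $\mathrm{ass}(S):=\{r\mid sr=0\text{ for some }s\in S\}$; it is a left denominator set if moreover $rs=0$ ($s\in S$) implies $tr=0$ for some $t\in S$. $\mathrm{Den}_l(R)$ is the set of left denominator sets, $\mathrm{maxDen}_l(R)$ the set of its maximal elements under inclusion, $\mathrm{Ass}_l(R)=\{\mathrm{ass}(S)\mid S\in\mathrm{Den}_l(R)\}$, $\mathrm{Den}_l(R,\mathfrak b)=\{S\in\mathrm{Den}_l(R)\mid\mathrm{ass}(S)=\mathfrak b\}$, and $S_{\mathfrak b}(R)$ is the largest element of $\mathrm{Den}_l(R,\mathfrak b)$ (it exists). For a ring $B$, $S_0(B):=S_{0}(B)$ is the largest element of $\mathrm{Den}_l(B,0)$ and $Q_l(B):=S_0(B)^{-1}B$. *)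

theory Defs
  imports "HOL-Algebra.Algebra"
begin

definition mult_closed :: "('a,'m) ring_scheme \<Rightarrow> 'a set \<Rightarrow> bool" where
  "mult_closed R S \<longleftrightarrow> S \<subseteq> carrier R \<and> \<one>\<^bsub>R\<^esub> \<in> S \<and> \<zero>\<^bsub>R\<^esub> \<notin> S \<and>
     (\<forall>s\<in>S. \<forall>t\<in>S. s \<otimes>\<^bsub>R\<^esub> t \<in> S)"

definition left_Ore :: "('a,'m) ring_scheme \<Rightarrow> 'a set \<Rightarrow> bool" where
  "left_Ore R S \<longleftrightarrow> mult_closed R S \<and>
     (\<forall>r\<in>carrier R. \<forall>s\<in>S. \<exists>s'\<in>S. \<exists>r'\<in>carrier R. s' \<otimes>\<^bsub>R\<^esub> r = r' \<otimes>\<^bsub>R\<^esub> s)"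

definition ass :: "('a,'m) ring_scheme \<Rightarrow> 'a set \<Rightarrow> 'a set" where
  "ass R S = {r \<in> carrier R. \<exists>s\<in>S. s \<otimes>\<^bsub>R\<^esub> r = \<zero>\<^bsub>R\<^esub>}"

definition left_den :: "('a,'m) ring_scheme \<Rightarrow> 'a set \<Rightarrow> bool" where
  "left_den R S \<longleftrightarrow> left_Ore R S \<and>
     (\<forall>r\<in>carrier R. \<forall>s\<in>S. r \<otimes>\<^bsub>R\<^esub> s = \<zero>\<^bsub>R\<^esub> \<longrightarrow> (\<exists>t\<in>S. t \<otimes>\<^bsub>R\<^esub> r = \<zero>\<^bsub>R\<^esub>))"

definition Den_l :: "('a,'m) ring_scheme \<Rightarrow> 'a set set" where
  "Den_l R = {S. left_den R S}"

definition maxDen_l :: "('a,'m) ring_scheme \<Rightarrow> 'a set set" where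
  "maxDen_l R = {S \<in> Den_l R. \<forall>T\<in>Den_l R. S \<subseteq> T \<longrightarrow> T = S}"

definition Ass_l :: "('a,'m) ring_scheme \<Rightarrow> 'a set set" where
  "Ass_l R = ass R ` Den_l R"

definition Den_l_ass :: "('a,'m) ring_scheme \<Rightarrow> 'a set \<Rightarrow> 'a set set" where
  "Den_l_ass R b = {S \<in> Den_l R. ass R S = b}"

text \<open>The largest element of Den_l(R,b) (exists whenever b is in Ass_l R).\<close>
definition S_ass :: "('a,'m) ring_scheme \<Rightarrow> 'a set \<Rightarrow> 'a set" where
  "S_ass R b = (THE S. S \<in> Den_l_ass R b \<and> (\<forall>T\<in>Den_l_ass R b. T \<subseteq> S))"

definition S0 :: "('a,'m) ring_scheme \<Rightarrow> 'a set" where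
  "S0 R = S_ass R {\<zero>\<^bsub>R\<^esub>}"

text \<open>The left ring of fractions: sigma : R -> A is a left localization of R at S
  (A = S^{-1}R with sigma(r) = r/1) iff sigma is a ring homomorphism, sigma(S) consists
  of units, every element of A is a left fraction sigma(s)^{-1} sigma(r), and
  ker sigma = ass(S).\<close>
definition is_left_loc ::
  "('a,'m) ring_scheme \<Rightarrow> 'a set \<Rightarrow> ('b,'n) ring_scheme \<Rightarrow> ('a \<Rightarrow> 'b) \<Rightarrow> bool" where
  "is_left_loc R S A \<sigma> \<longleftrightarrow> ring A \<and> \<sigma> \<in> ring_hom R A \<and>
     (\<forall>s\<in>S. \<sigma> s \<in> Units A) \<and>
     (\<forall>a\<in>carrier A. \<exists>s\<in>S. \<exists>r\<in>carrier R. a = inv\<^bsub>A\<^esub> (\<sigma> s) \<otimes>\<^bsub>A\<^esub> \<sigma> r) \<and>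
     (\<forall>r\<in>carrier R. \<sigma> r = \<zero>\<^bsub>A\<^esub> \<longleftrightarrow> r \<in> ass R S)"

end

theory Submission
  imports Defs
begin

inductive_set genW :: "('b,'n) ring_scheme \<Rightarrow> 'b set \<Rightarrow> 'b set" for A G where
  one: "\<one>\<^bsub>A\<^esub> \<in> genW A G"
| unit: "u \<in> Units A \<Longrightarrow> w \<in> genW A G \<Longrightarrow> u \<otimes>\<^bsub>A\<^esub> w \<in> genW A G"
| gen: "g \<in> G \<Longrightarrow> w \<in> genW A G \<Longrightarrow> g \<otimes>\<^bsub>A\<^esub> w \<in> genW A G"

lemma den_facts:
  assumes "T \<in> Den_l R"
  shows "T \<subseteq> carrier R" "\<one>\<^bsub>R\<^esub> \<in> T" "\<zero>\<^bsub>R\<^esub> \<notin> T"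
    "\<forall>s\<in>T. \<forall>t\<in>T. s \<otimes>\<^bsub>R\<^esub> t \<in> T"
    "\<forall>r\<in>carrier R. \<forall>s\<in>T. \<exists>s'\<in>T. \<exists>r'\<in>carrier R. s' \<otimes>\<^bsub>R\<^esub> r = r' \<otimes>\<^bsub>R\<^esub> s"
    "\<forall>r\<in>carrier R. \<forall>s\<in>T. r \<otimes>\<^bsub>R\<^esub> s = \<zero>\<^bsub>R\<^esub> \<longrightarrow> (\<exists>t\<in>T. t \<otimes>\<^bsub>R\<^esub> r = \<zero>\<^bsub>R\<^esub>)"
  using assms by (auto simp: Den_l_def left_den_def left_Ore_def mult_closed_def)

lemma den_intro:
  assumes "T \<subseteq> carrier R" "\<one>\<^bsub>R\<^esub> \<in> T" "\<zero>\<^bsub>R\<^esub> \<notin> T"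
    "\<forall>s\<in>T. \<forall>t\<in>T. s \<otimes>\<^bsub>R\<^esub> t \<in> T"
    "\<forall>r\<in>carrier R. \<forall>s\<in>T. \<exists>s'\<in>T. \<exists>r'\<in>carrier R. s' \<otimes>\<^bsub>R\<^esub> r = r' \<otimes>\<^bsub>R\<^esub> s"
    "\<forall>r\<in>carrier R. \<forall>s\<in>T. r \<otimes>\<^bsub>R\<^esub> s = \<zero>\<^bsub>R\<^esub> \<longrightarrow> (\<exists>t\<in>T. t \<otimes>\<^bsub>R\<^esub> r = \<zero>\<^bsub>R\<^esub>)"
  shows "T \<in> Den_l R"
  using assms unfolding Den_l_def left_den_def left_Ore_def mult_closed_def by blast

lemma S_ass_eq:
  assumes "S' \<in> Den_l_ass R b" "\<forall>T\<in>Den_l_ass R b. T \<subseteq> S'"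
  shows "S_ass R b = S'"
  unfolding S_ass_def
proof (rule the_equality)
  show "S' \<in> Den_l_ass R b \<and> (\<forall>T\<in>Den_l_ass R b. T \<subseteq> S')" using assms by blast
next
  fix XX assume "XX \<in> Den_l_ass R b \<and> (\<forall>T\<in>Den_l_ass R b. T \<subseteq> XX)"
  thus "XX = S'" using assms by blast
qed

locale LL = R: ring R + A: ring A
  for R :: "('a,'m) ring_scheme" and A :: "('b,'n) ring_scheme" +
  fixes S :: "'a set" and \<sigma> :: "'a \<Rightarrow> 'b"
  assumes maxS: "S \<in> maxDen_l R" and loc: "is_left_loc R S A \<sigma>"
begin

lemma hom: "ring_hom_ring R A \<sigma>"
  using loc unfolding is_left_loc_def
  by (intro ring_hom_ringI2) (auto simp: R.ring_axioms A.ring_axioms)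

sublocale h: ring_hom_ring R A \<sigma> by (rule hom)

lemma denS: "left_den R S" using maxS by (simp add: maxDen_l_def Den_l_def)

lemma S_sub: "S \<subseteq> carrier R" and one_S: "\<one>\<^bsub>R\<^esub> \<in> S" and zero_S: "\<zero>\<^bsub>R\<^esub> \<notin> S"
  and S_mult: "\<And>s t. s \<in> S \<Longrightarrow> t \<in> S \<Longrightarrow> s \<otimes>\<^bsub>R\<^esub> t \<in> S"
  using denS by (auto simp: left_den_def left_Ore_def mult_closed_def)

lemma S_car: "s \<in> S \<Longrightarrow> s \<in> carrier R" using S_sub by auto

lemma S_Ore: "r \<in> carrier R \<Longrightarrow> s \<in> S \<Longrightarrow> \<exists>s'\<in>S. \<exists>r'\<in>carrier R. s' \<otimes>\<^bsub>R\<^esub> r = r' \<otimes>\<^bsub>R\<^esub> s"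
  using denS by (auto simp: left_den_def left_Ore_def)

lemma S_rev: "r \<in> carrier R \<Longrightarrow> s \<in> S \<Longrightarrow> r \<otimes>\<^bsub>R\<^esub> s = \<zero>\<^bsub>R\<^esub> \<Longrightarrow> \<exists>t\<in>S. t \<otimes>\<^bsub>R\<^esub> r = \<zero>\<^bsub>R\<^esub>"
  using denS by (auto simp: left_den_def)

lemma unitS: "s \<in> S \<Longrightarrow> \<sigma> s \<in> Units A"
  using loc by (auto simp: is_left_loc_def)

lemma frac: "a \<in> carrier A \<Longrightarrow> \<exists>s\<in>S. \<exists>r\<in>carrier R. a = inv\<^bsub>A\<^esub> (\<sigma> s) \<otimes>\<^bsub>A\<^esub> \<sigma> r"
  using loc by (auto simp: is_left_loc_def)

lemma ker: "r \<in> carrier R \<Longrightarrow> \<sigma> r = \<zero>\<^bsub>A\<^esub> \<longleftrightarrow> r \<in> ass R S"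
  using loc by (auto simp: is_left_loc_def)

lemma kerE: "r \<in> carrier R \<Longrightarrow> \<sigma> r = \<zero>\<^bsub>A\<^esub> \<Longrightarrow> \<exists>s\<in>S. s \<otimes>\<^bsub>R\<^esub> r = \<zero>\<^bsub>R\<^esub>"
  using ker by (auto simp: ass_def)

lemma eqE: assumes "x \<in> carrier R" "y \<in> carrier R" "\<sigma> x = \<sigma> y"
  shows "\<exists>s\<in>S. s \<otimes>\<^bsub>R\<^esub> x = s \<otimes>\<^bsub>R\<^esub> y"
proof -
  have "\<sigma> (x \<ominus>\<^bsub>R\<^esub> y) = \<zero>\<^bsub>A\<^esub>" using assms by (simp add: a_minus_def h.hom_add A.r_neg)
  then obtain s where s: "s \<in> S" "s \<otimes>\<^bsub>R\<^esub> (x \<ominus>\<^bsub>R\<^esub> y) = \<zero>\<^bsub>R\<^esub>" using kerE assms by blast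
  hence "s \<otimes>\<^bsub>R\<^esub> x \<ominus>\<^bsub>R\<^esub> s \<otimes>\<^bsub>R\<^esub> y = \<zero>\<^bsub>R\<^esub>" using assms S_car
    by (simp add: a_minus_def R.r_distr R.r_minus)
  thus ?thesis using s assms S_car by auto
qed

lemma one_ne_zero_A: "\<one>\<^bsub>A\<^esub> \<noteq> \<zero>\<^bsub>A\<^esub>"
proof
  assume "\<one>\<^bsub>A\<^esub> = \<zero>\<^bsub>A\<^esub>"
  hence "\<sigma> \<one>\<^bsub>R\<^esub> = \<zero>\<^bsub>A\<^esub>" by simp
  then obtain s where "s \<in> S" "s \<otimes>\<^bsub>R\<^esub> \<one>\<^bsub>R\<^esub> = \<zero>\<^bsub>R\<^esub>" using kerE by blast
  thus False using zero_S S_car by auto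
qed

lemma zero_not_unit: "\<zero>\<^bsub>A\<^esub> \<notin> Units A"
  using one_ne_zero_A A.Units_l_inv A.Units_inv_closed A.Units_closed
  by (metis A.l_null A.r_null A.Units_r_inv)


lemma W_car: assumes "G \<subseteq> carrier A" "w \<in> genW A G" shows "w \<in> carrier A"
  using assms(2) by induction (use assms(1) in auto)

lemma W_mult: assumes "G \<subseteq> carrier A" "w1 \<in> genW A G" "w2 \<in> genW A G"
  shows "w1 \<otimes>\<^bsub>A\<^esub> w2 \<in> genW A G"
  using assms(2)
proof (induction rule: genW.induct)
  case one then show ?case using assms W_car by simp
next
  case (unit u w) then show ?case using assms W_car
    by (metis A.Units_closed A.m_assoc genW.unit)
next
  case (gen g w) then show ?case using assms W_car
    by (metis A.m_assoc genW.gen subsetD)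
qed

lemma W_unit: "u \<in> Units A \<Longrightarrow> u \<in> genW A G"
  using genW.unit[OF _ genW.one, of u A G] by (metis A.Units_closed A.r_one)

lemma W_Ore:
  assumes G: "G \<subseteq> carrier A"
    and GOre: "\<forall>g\<in>G. \<forall>a\<in>carrier A. \<exists>q\<in>genW A G. \<exists>c\<in>carrier A. q \<otimes>\<^bsub>A\<^esub> a = c \<otimes>\<^bsub>A\<^esub> g"
    and w: "w \<in> genW A G"
  shows "\<And>a. a \<in> carrier A \<Longrightarrow> \<exists>q\<in>genW A G. \<exists>c\<in>carrier A. q \<otimes>\<^bsub>A\<^esub> a = c \<otimes>\<^bsub>A\<^esub> w"
  using w
proof (induction rule: genW.induct)
  case one
  then show ?case using genW.one[of A G] by (intro bexI[of _ "\<one>\<^bsub>A\<^esub>"] bexI[of _ a]) auto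
next
  case (unit u w a)
  then obtain q c where q: "q \<in> genW A G" "c \<in> carrier A" "q \<otimes>\<^bsub>A\<^esub> a = c \<otimes>\<^bsub>A\<^esub> w" by blast
  have wc: "w \<in> carrier A" using W_car[OF G unit.hyps(2)] .
  have "c \<otimes>\<^bsub>A\<^esub> w = (c \<otimes>\<^bsub>A\<^esub> inv\<^bsub>A\<^esub> u) \<otimes>\<^bsub>A\<^esub> (u \<otimes>\<^bsub>A\<^esub> w)"
    using unit.hyps(1) q wc
    by (metis A.Units_closed A.Units_inv_closed A.Units_l_inv A.l_one A.m_assoc A.m_closed)
  then show ?case using q unit.hyps(1) by auto
next
  case (gen g w a)
  then obtain q c where q: "q \<in> genW A G" "c \<in> carrier A" "q \<otimes>\<^bsub>A\<^esub> a = c \<otimes>\<^bsub>A\<^esub> w" by blast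
  have wc: "w \<in> carrier A" using W_car[OF G gen.hyps(2)] .
  have gc: "g \<in> carrier A" using G gen.hyps(1) by auto
  obtain q' c' where q': "q' \<in> genW A G" "c' \<in> carrier A" "q' \<otimes>\<^bsub>A\<^esub> c = c' \<otimes>\<^bsub>A\<^esub> g"
    using GOre gen.hyps(1) q(2) by blast
  have q'c: "q' \<in> carrier A" using W_car[OF G q'(1)] .
  have qc: "q \<in> carrier A" using W_car[OF G q(1)] .
  have "(q' \<otimes>\<^bsub>A\<^esub> q) \<otimes>\<^bsub>A\<^esub> a = c' \<otimes>\<^bsub>A\<^esub> (g \<otimes>\<^bsub>A\<^esub> w)"
    using q q' q'c qc wc gc gen.prems by (simp add: A.m_assoc) (metis A.m_assoc)
  then show ?case using W_mult[OF G q'(1) q(1)] q'(2) by blast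
qed

lemma W_rev:
  assumes G: "G \<subseteq> carrier A"
    and K: "K \<subseteq> carrier A" "\<one>\<^bsub>A\<^esub> \<in> K"
      "\<forall>k\<in>K. \<forall>k'\<in>K. k \<otimes>\<^bsub>A\<^esub> k' \<in> K"
    and Grev: "\<forall>g\<in>G. \<forall>y\<in>carrier A. y \<otimes>\<^bsub>A\<^esub> g = \<zero>\<^bsub>A\<^esub> \<longrightarrow> (\<exists>k\<in>K. k \<otimes>\<^bsub>A\<^esub> y = \<zero>\<^bsub>A\<^esub>)"
    and w: "w \<in> genW A G"
  shows "\<And>x. x \<in> carrier A \<Longrightarrow> x \<otimes>\<^bsub>A\<^esub> w = \<zero>\<^bsub>A\<^esub> \<Longrightarrow> \<exists>k\<in>K. k \<otimes>\<^bsub>A\<^esub> x = \<zero>\<^bsub>A\<^esub>"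
  using w
proof (induction rule: genW.induct)
  case (one x)
  then show ?case using K by (intro bexI[of _ "\<one>\<^bsub>A\<^esub>"]) auto
next
  case (unit u w x)
  have wc: "w \<in> carrier A" using W_car[OF G unit.hyps(2)] .
  have uc: "u \<in> carrier A" using unit.hyps(1) by auto
  have "(x \<otimes>\<^bsub>A\<^esub> u) \<otimes>\<^bsub>A\<^esub> w = \<zero>\<^bsub>A\<^esub>" using unit.prems wc uc by (simp add: A.m_assoc)
  then obtain k where k: "k \<in> K" "k \<otimes>\<^bsub>A\<^esub> (x \<otimes>\<^bsub>A\<^esub> u) = \<zero>\<^bsub>A\<^esub>" using unit.IH unit.prems uc by blast
  have kc: "k \<in> carrier A" using K k by auto
  have "k \<otimes>\<^bsub>A\<^esub> x = (k \<otimes>\<^bsub>A\<^esub> (x \<otimes>\<^bsub>A\<^esub> u)) \<otimes>\<^bsub>A\<^esub> inv\<^bsub>A\<^esub> u"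
    using unit.hyps(1) kc unit.prems uc by (simp add: A.m_assoc)
  then show ?case using k unit.hyps(1) by auto
next
  case (gen g w x)
  have wc: "w \<in> carrier A" using W_car[OF G gen.hyps(2)] .
  have gc: "g \<in> carrier A" using gen.hyps(1) G by auto
  have "(x \<otimes>\<^bsub>A\<^esub> g) \<otimes>\<^bsub>A\<^esub> w = \<zero>\<^bsub>A\<^esub>" using gen.prems wc gc by (simp add: A.m_assoc)
  then obtain k where k: "k \<in> K" "k \<otimes>\<^bsub>A\<^esub> (x \<otimes>\<^bsub>A\<^esub> g) = \<zero>\<^bsub>A\<^esub>" using gen.IH gen.prems gc by blast
  have kc: "k \<in> carrier A" using K k by auto
  have "(k \<otimes>\<^bsub>A\<^esub> x) \<otimes>\<^bsub>A\<^esub> g = \<zero>\<^bsub>A\<^esub>" using k kc gc gen.prems by (simp add: A.m_assoc)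
  then obtain k' where k': "k' \<in> K" "k' \<otimes>\<^bsub>A\<^esub> (k \<otimes>\<^bsub>A\<^esub> x) = \<zero>\<^bsub>A\<^esub>"
    using Grev gen.hyps(1) kc gen.prems A.m_closed by meson
  have "(k' \<otimes>\<^bsub>A\<^esub> k) \<otimes>\<^bsub>A\<^esub> x = \<zero>\<^bsub>A\<^esub>" using k' kc K gen.prems by (simp add: A.m_assoc subset_iff)
  then show ?case using K(3) k'(1) k(1) by blast
qed


lemma U1: "u \<in> Units A \<Longrightarrow> a \<in> carrier A \<Longrightarrow> b \<in> carrier A \<Longrightarrow>
   a = inv\<^bsub>A\<^esub> u \<otimes>\<^bsub>A\<^esub> b \<longleftrightarrow> u \<otimes>\<^bsub>A\<^esub> a = b"
proof -
  assume u: "u \<in> Units A" and a: "a \<in> carrier A" and b: "b \<in> carrier A"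
  have uc: "u \<in> carrier A" "inv\<^bsub>A\<^esub> u \<in> carrier A" using u by auto
  show ?thesis
  proof
    assume "a = inv\<^bsub>A\<^esub> u \<otimes>\<^bsub>A\<^esub> b"
    thus "u \<otimes>\<^bsub>A\<^esub> a = b" using u uc b by (simp add: A.m_assoc[symmetric])
  next
    assume "u \<otimes>\<^bsub>A\<^esub> a = b"
    hence "inv\<^bsub>A\<^esub> u \<otimes>\<^bsub>A\<^esub> b = inv\<^bsub>A\<^esub> u \<otimes>\<^bsub>A\<^esub> (u \<otimes>\<^bsub>A\<^esub> a)" by simp
    also have "\<dots> = a" using u uc a by (simp add: A.m_assoc[symmetric])
    finally show "a = inv\<^bsub>A\<^esub> u \<otimes>\<^bsub>A\<^esub> b" by simp
  qed
qed

lemma fracE: assumes "a \<in> carrier A"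
  obtains p v where "p \<in> S" "v \<in> carrier R" "\<sigma> v = \<sigma> p \<otimes>\<^bsub>A\<^esub> a"
proof -
  obtain s r where sr: "s \<in> S" "r \<in> carrier R" "a = inv\<^bsub>A\<^esub> (\<sigma> s) \<otimes>\<^bsub>A\<^esub> \<sigma> r"
    using frac[OF assms] by blast
  have "\<sigma> r = \<sigma> s \<otimes>\<^bsub>A\<^esub> a" using U1[OF unitS[OF sr(1)] assms h.hom_closed[OF sr(2)]] sr(3) by simp
  thus ?thesis using that sr by blast
qed

lemma GEN:
  assumes G: "G \<subseteq> carrier A"
    and K: "K \<subseteq> genW A G" "\<one>\<^bsub>A\<^esub> \<in> K" "\<zero>\<^bsub>A\<^esub> \<notin> K"
      "\<forall>k\<in>K. \<forall>k'\<in>K. k \<otimes>\<^bsub>A\<^esub> k' \<in> K"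
    and GOre: "\<forall>g\<in>G. \<forall>a\<in>carrier A. \<exists>q\<in>genW A G. \<exists>c\<in>carrier A. q \<otimes>\<^bsub>A\<^esub> a = c \<otimes>\<^bsub>A\<^esub> g"
    and Grev: "\<forall>g\<in>G. \<forall>y\<in>carrier A. y \<otimes>\<^bsub>A\<^esub> g = \<zero>\<^bsub>A\<^esub> \<longrightarrow> (\<exists>k\<in>K. k \<otimes>\<^bsub>A\<^esub> y = \<zero>\<^bsub>A\<^esub>)"
  shows "{r \<in> carrier R. \<sigma> r \<in> genW A G} = S"
proof -
  define W where "W = genW A G"
  define S2 where "S2 = {r \<in> carrier R. \<sigma> r \<in> W}"
  have Wc: "\<And>w. w \<in> W \<Longrightarrow> w \<in> carrier A" using W_car[OF G] W_def by blast
  have Kc: "K \<subseteq> carrier A" using K(1) Wc W_def by blast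
  have Wrev: "\<And>w x. w \<in> W \<Longrightarrow> x \<in> carrier A \<Longrightarrow> x \<otimes>\<^bsub>A\<^esub> w = \<zero>\<^bsub>A\<^esub> \<Longrightarrow> \<exists>k\<in>K. k \<otimes>\<^bsub>A\<^esub> x = \<zero>\<^bsub>A\<^esub>"
  proof -
    fix w x assume "w \<in> W" "x \<in> carrier A" "x \<otimes>\<^bsub>A\<^esub> w = \<zero>\<^bsub>A\<^esub>"
    thus "\<exists>k\<in>K. k \<otimes>\<^bsub>A\<^esub> x = \<zero>\<^bsub>A\<^esub>"
      using W_rev[OF G Kc K(2) K(4) Grev, of w x] W_def by blast
  qed
  have WOre: "\<And>w a. w \<in> W \<Longrightarrow> a \<in> carrier A \<Longrightarrow> \<exists>q\<in>W. \<exists>c\<in>carrier A. q \<otimes>\<^bsub>A\<^esub> a = c \<otimes>\<^bsub>A\<^esub> w"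
  proof -
    fix w a assume "w \<in> W" "a \<in> carrier A"
    thus "\<exists>q\<in>W. \<exists>c\<in>carrier A. q \<otimes>\<^bsub>A\<^esub> a = c \<otimes>\<^bsub>A\<^esub> w"
      using W_Ore[OF G GOre, of w a] W_def by blast
  qed
  have Wu: "\<And>u w. u \<in> Units A \<Longrightarrow> w \<in> W \<Longrightarrow> u \<otimes>\<^bsub>A\<^esub> w \<in> W" unfolding W_def by (rule genW.unit)
  have zW: "\<zero>\<^bsub>A\<^esub> \<notin> W"
  proof
    assume "\<zero>\<^bsub>A\<^esub> \<in> W"
    then obtain k where "k \<in> K" "k \<otimes>\<^bsub>A\<^esub> \<one>\<^bsub>A\<^esub> = \<zero>\<^bsub>A\<^esub>" using Wrev[of "\<zero>\<^bsub>A\<^esub>" "\<one>\<^bsub>A\<^esub>"] by auto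
    thus False using K(3) Kc by auto
  qed
  have SS2: "S \<subseteq> S2" using S_car unitS W_unit W_def S2_def by auto
  have mc: "mult_closed R S2"
    unfolding mult_closed_def S2_def using zW genW.one[of A G] W_mult[OF G]
    by (auto simp: W_def)
  have Ore: "\<exists>s'\<in>S2. \<exists>r'\<in>carrier R. s' \<otimes>\<^bsub>R\<^esub> r = r' \<otimes>\<^bsub>R\<^esub> s2"
    if r: "r \<in> carrier R" and s2: "s2 \<in> S2" for r s2
  proof -
    have s2c: "s2 \<in> carrier R" "\<sigma> s2 \<in> W" using s2 unfolding S2_def by blast+
    obtain q c where q: "q \<in> W" "c \<in> carrier A" "q \<otimes>\<^bsub>A\<^esub> \<sigma> r = c \<otimes>\<^bsub>A\<^esub> \<sigma> s2"
      using WOre[OF s2c(2) h.hom_closed[OF r]] by blast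
    have qc: "q \<in> carrier A" using Wc q by auto
    obtain p v where pv: "p \<in> S" "v \<in> carrier R" "\<sigma> v = \<sigma> p \<otimes>\<^bsub>A\<^esub> q" using fracE[OF qc] by blast
    have pc: "p \<in> carrier R" using pv S_car by auto
    obtain p' w' where pw: "p' \<in> S" "w' \<in> carrier R" "\<sigma> w' = \<sigma> p' \<otimes>\<^bsub>A\<^esub> (\<sigma> p \<otimes>\<^bsub>A\<^esub> c)"
      using fracE[of "\<sigma> p \<otimes>\<^bsub>A\<^esub> c"] q pc by auto
    have p'c: "p' \<in> carrier R" using pw S_car by auto
    have "\<sigma> (p' \<otimes>\<^bsub>R\<^esub> v \<otimes>\<^bsub>R\<^esub> r) = \<sigma> p' \<otimes>\<^bsub>A\<^esub> \<sigma> p \<otimes>\<^bsub>A\<^esub> (q \<otimes>\<^bsub>A\<^esub> \<sigma> r)"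
      using pv pc p'c r qc by (simp add: A.m_assoc)
    also have "\<dots> = \<sigma> w' \<otimes>\<^bsub>A\<^esub> \<sigma> s2"
      using q pw pc p'c s2c by (simp add: A.m_assoc)
    also have "\<dots> = \<sigma> (w' \<otimes>\<^bsub>R\<^esub> s2)" using pw s2c by simp
    finally obtain s'' where s'': "s'' \<in> S" "s'' \<otimes>\<^bsub>R\<^esub> (p' \<otimes>\<^bsub>R\<^esub> v \<otimes>\<^bsub>R\<^esub> r) = s'' \<otimes>\<^bsub>R\<^esub> (w' \<otimes>\<^bsub>R\<^esub> s2)"
      using eqE[of "p' \<otimes>\<^bsub>R\<^esub> v \<otimes>\<^bsub>R\<^esub> r" "w' \<otimes>\<^bsub>R\<^esub> s2"] pv p'c r pw s2c by auto
    have s''c: "s'' \<in> carrier R" using s'' S_car by auto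
    have u: "\<sigma> (s'' \<otimes>\<^bsub>R\<^esub> p' \<otimes>\<^bsub>R\<^esub> p) \<in> Units A" using unitS S_mult s'' pw pv by auto
    have e1: "\<sigma> (s'' \<otimes>\<^bsub>R\<^esub> p' \<otimes>\<^bsub>R\<^esub> v) = (\<sigma> s'' \<otimes>\<^bsub>A\<^esub> \<sigma> p') \<otimes>\<^bsub>A\<^esub> \<sigma> v"
      using s''c p'c pv(2) by simp
    have e2: "\<sigma> (s'' \<otimes>\<^bsub>R\<^esub> p' \<otimes>\<^bsub>R\<^esub> p) = (\<sigma> s'' \<otimes>\<^bsub>A\<^esub> \<sigma> p') \<otimes>\<^bsub>A\<^esub> \<sigma> p"
      using s''c p'c pc by simp
    have "\<sigma> (s'' \<otimes>\<^bsub>R\<^esub> p' \<otimes>\<^bsub>R\<^esub> v) = (\<sigma> s'' \<otimes>\<^bsub>A\<^esub> \<sigma> p') \<otimes>\<^bsub>A\<^esub> (\<sigma> p \<otimes>\<^bsub>A\<^esub> q)"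
      by (simp only: e1 pv(3))
    also have "\<dots> = ((\<sigma> s'' \<otimes>\<^bsub>A\<^esub> \<sigma> p') \<otimes>\<^bsub>A\<^esub> \<sigma> p) \<otimes>\<^bsub>A\<^esub> q"
      by (rule A.m_assoc[symmetric]) (use s''c p'c pc qc in auto)
    also have "\<dots> = \<sigma> (s'' \<otimes>\<^bsub>R\<^esub> p' \<otimes>\<^bsub>R\<^esub> p) \<otimes>\<^bsub>A\<^esub> q" by (simp only: e2)
    finally have "\<sigma> (s'' \<otimes>\<^bsub>R\<^esub> p' \<otimes>\<^bsub>R\<^esub> v) = \<sigma> (s'' \<otimes>\<^bsub>R\<^esub> p' \<otimes>\<^bsub>R\<^esub> p) \<otimes>\<^bsub>A\<^esub> q" .
    moreover have "s'' \<otimes>\<^bsub>R\<^esub> p' \<otimes>\<^bsub>R\<^esub> v \<in> carrier R" using s''c p'c pv(2) by simp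
    ultimately have "s'' \<otimes>\<^bsub>R\<^esub> p' \<otimes>\<^bsub>R\<^esub> v \<in> S2" unfolding S2_def using Wu[OF u q(1)] by simp
    moreover have "(s'' \<otimes>\<^bsub>R\<^esub> p' \<otimes>\<^bsub>R\<^esub> v) \<otimes>\<^bsub>R\<^esub> r = (s'' \<otimes>\<^bsub>R\<^esub> w') \<otimes>\<^bsub>R\<^esub> s2"
      using s'' s''c p'c pv r pw s2c by (simp add: R.m_assoc)
    ultimately show ?thesis using s''c pw by blast
  qed
  have rev: "\<exists>t\<in>S2. t \<otimes>\<^bsub>R\<^esub> r = \<zero>\<^bsub>R\<^esub>"
    if r: "r \<in> carrier R" and s2: "s2 \<in> S2" and rs: "r \<otimes>\<^bsub>R\<^esub> s2 = \<zero>\<^bsub>R\<^esub>" for r s2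
  proof -
    have s2c: "s2 \<in> carrier R" "\<sigma> s2 \<in> W" using s2 unfolding S2_def by blast+
    have "\<sigma> r \<otimes>\<^bsub>A\<^esub> \<sigma> s2 = \<zero>\<^bsub>A\<^esub>" using rs r s2c by (metis h.hom_mult h.hom_zero)
    then obtain k where k: "k \<in> K" "k \<otimes>\<^bsub>A\<^esub> \<sigma> r = \<zero>\<^bsub>A\<^esub>" using Wrev[OF s2c(2) h.hom_closed[OF r]] by blast
    have kW: "k \<in> W" using k K(1) W_def by auto
    have kc: "k \<in> carrier A" using Kc k by auto
    obtain p v where pv: "p \<in> S" "v \<in> carrier R" "\<sigma> v = \<sigma> p \<otimes>\<^bsub>A\<^esub> k" using fracE[OF kc] by blast
    have pc: "p \<in> carrier R" using pv S_car by auto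
    have "\<sigma> (v \<otimes>\<^bsub>R\<^esub> r) = \<sigma> p \<otimes>\<^bsub>A\<^esub> (k \<otimes>\<^bsub>A\<^esub> \<sigma> r)" using pv pc r kc by (simp add: A.m_assoc)
    hence "\<sigma> (v \<otimes>\<^bsub>R\<^esub> r) = \<zero>\<^bsub>A\<^esub>" using k pc by simp
    then obtain s'' where s'': "s'' \<in> S" "s'' \<otimes>\<^bsub>R\<^esub> (v \<otimes>\<^bsub>R\<^esub> r) = \<zero>\<^bsub>R\<^esub>" using kerE pv r by blast
    have s''c: "s'' \<in> carrier R" using s'' S_car by auto
    have u: "\<sigma> (s'' \<otimes>\<^bsub>R\<^esub> p) \<in> Units A" using unitS S_mult s'' pv by auto
    have e1: "\<sigma> (s'' \<otimes>\<^bsub>R\<^esub> v) = \<sigma> s'' \<otimes>\<^bsub>A\<^esub> \<sigma> v" using s''c pv(2) by simp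
    have e2: "\<sigma> (s'' \<otimes>\<^bsub>R\<^esub> p) = \<sigma> s'' \<otimes>\<^bsub>A\<^esub> \<sigma> p" using s''c pc by simp
    have "\<sigma> (s'' \<otimes>\<^bsub>R\<^esub> v) = \<sigma> s'' \<otimes>\<^bsub>A\<^esub> (\<sigma> p \<otimes>\<^bsub>A\<^esub> k)" by (simp only: e1 pv(3))
    also have "\<dots> = (\<sigma> s'' \<otimes>\<^bsub>A\<^esub> \<sigma> p) \<otimes>\<^bsub>A\<^esub> k"
      by (rule A.m_assoc[symmetric]) (use s''c pc kc in auto)
    also have "\<dots> = \<sigma> (s'' \<otimes>\<^bsub>R\<^esub> p) \<otimes>\<^bsub>A\<^esub> k" by (simp only: e2)
    finally have "\<sigma> (s'' \<otimes>\<^bsub>R\<^esub> v) = \<sigma> (s'' \<otimes>\<^bsub>R\<^esub> p) \<otimes>\<^bsub>A\<^esub> k" .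
    moreover have "s'' \<otimes>\<^bsub>R\<^esub> v \<in> carrier R" using s''c pv(2) by simp
    ultimately have "s'' \<otimes>\<^bsub>R\<^esub> v \<in> S2" unfolding S2_def using Wu[OF u kW] by simp
    moreover have "(s'' \<otimes>\<^bsub>R\<^esub> v) \<otimes>\<^bsub>R\<^esub> r = \<zero>\<^bsub>R\<^esub>" using s'' s''c pv r by (simp add: R.m_assoc)
    ultimately show ?thesis by blast
  qed
  have "left_den R S2" unfolding left_den_def left_Ore_def using mc Ore rev by blast
  hence "S2 = S" using maxS SS2 by (auto simp: maxDen_l_def Den_l_def)
  thus ?thesis by (simp add: S2_def W_def)
qed


lemma S_units: "{r \<in> carrier R. \<sigma> r \<in> Units A} = S"
proof -
  have "{r \<in> carrier R. \<sigma> r \<in> genW A {}} = S"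
    by (rule GEN[where K="{\<one>\<^bsub>A\<^esub>}"]) (auto simp: genW.one one_ne_zero_A[symmetric])
  thus ?thesis using W_unit unitS S_car by blast
qed

lemma denA:
  assumes "T \<in> Den_l A"
  shows "T \<subseteq> carrier A" "\<one>\<^bsub>A\<^esub> \<in> T" "\<zero>\<^bsub>A\<^esub> \<notin> T"
    "\<forall>s\<in>T. \<forall>t\<in>T. s \<otimes>\<^bsub>A\<^esub> t \<in> T"
    "\<forall>r\<in>carrier A. \<forall>s\<in>T. \<exists>s'\<in>T. \<exists>r'\<in>carrier A. s' \<otimes>\<^bsub>A\<^esub> r = r' \<otimes>\<^bsub>A\<^esub> s"
    "\<forall>r\<in>carrier A. \<forall>s\<in>T. r \<otimes>\<^bsub>A\<^esub> s = \<zero>\<^bsub>A\<^esub> \<longrightarrow> (\<exists>t\<in>T. t \<otimes>\<^bsub>A\<^esub> r = \<zero>\<^bsub>A\<^esub>)"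
  using assms by (auto simp: Den_l_def left_den_def left_Ore_def mult_closed_def)

lemma Den_A_units:
  assumes T: "T \<in> Den_l A"
  shows "T \<subseteq> Units A"
proof -
  note d = denA[OF T]
  have Tg: "T \<subseteq> genW A T"
  proof
    fix t assume "t \<in> T"
    thus "t \<in> genW A T" using genW.gen[OF _ genW.one, of t T A] d(1) by auto
  qed
  have eq: "{r \<in> carrier R. \<sigma> r \<in> genW A T} = S"
  proof (rule GEN[where K=T])
    show "\<forall>g\<in>T. \<forall>a\<in>carrier A. \<exists>q\<in>genW A T. \<exists>c\<in>carrier A. q \<otimes>\<^bsub>A\<^esub> a = c \<otimes>\<^bsub>A\<^esub> g"
      using d(5) Tg by blast
  qed (use d Tg in auto)
  show ?thesis
  proof
    fix t assume t: "t \<in> T"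
    have tc: "t \<in> carrier A" using d(1) t by auto
    obtain p v where pv: "p \<in> S" "v \<in> carrier R" "\<sigma> v = \<sigma> p \<otimes>\<^bsub>A\<^esub> t" using fracE[OF tc] by blast
    have "\<sigma> p \<otimes>\<^bsub>A\<^esub> t \<in> genW A T" using genW.unit[OF unitS[OF pv(1)]] Tg t by auto
    hence "v \<in> S" using eq pv by auto
    hence "\<sigma> v \<in> Units A" by (rule unitS)
    moreover have "t = inv\<^bsub>A\<^esub> (\<sigma> p) \<otimes>\<^bsub>A\<^esub> \<sigma> v"
      using U1[OF unitS[OF pv(1)] tc h.hom_closed[OF pv(2)]] pv(3) by simp
    ultimately show "t \<in> Units A" using unitS[OF pv(1)] by simp
  qed
qed

lemma denR:
  assumes "T \<in> Den_l R"
  shows "T \<subseteq> carrier R" "\<one>\<^bsub>R\<^esub> \<in> T" "\<zero>\<^bsub>R\<^esub> \<notin> T"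
    "\<forall>s\<in>T. \<forall>t\<in>T. s \<otimes>\<^bsub>R\<^esub> t \<in> T"
    "\<forall>r\<in>carrier R. \<forall>s\<in>T. \<exists>s'\<in>T. \<exists>r'\<in>carrier R. s' \<otimes>\<^bsub>R\<^esub> r = r' \<otimes>\<^bsub>R\<^esub> s"
    "\<forall>r\<in>carrier R. \<forall>s\<in>T. r \<otimes>\<^bsub>R\<^esub> s = \<zero>\<^bsub>R\<^esub> \<longrightarrow> (\<exists>t\<in>T. t \<otimes>\<^bsub>R\<^esub> r = \<zero>\<^bsub>R\<^esub>)"
  using assms by (auto simp: Den_l_def left_den_def left_Ore_def mult_closed_def)

lemma S_largest:
  assumes T: "T \<in> Den_l R" and assT: "ass R T = ass R S"
  shows "T \<subseteq> S"
proof -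
  note d = denR[OF T]
  have Tc: "\<And>t. t \<in> T \<Longrightarrow> t \<in> carrier R" using d(1) by auto
  have Tg: "\<sigma> ` T \<subseteq> genW A (\<sigma> ` T)"
  proof
    fix t assume "t \<in> \<sigma> ` T"
    thus "t \<in> genW A (\<sigma> ` T)" using genW.gen[OF _ genW.one, of t "\<sigma> ` T" A] Tc by auto
  qed
  have Ore: "\<forall>g\<in>\<sigma> ` T. \<forall>a\<in>carrier A. \<exists>q\<in>genW A (\<sigma> ` T). \<exists>c\<in>carrier A. q \<otimes>\<^bsub>A\<^esub> a = c \<otimes>\<^bsub>A\<^esub> g"
  proof (intro ballI)
    fix g a assume g: "g \<in> \<sigma> ` T" and a: "a \<in> carrier A"
    obtain t where t: "t \<in> T" "g = \<sigma> t" using g by auto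
    obtain p v where pv: "p \<in> S" "v \<in> carrier R" "\<sigma> v = \<sigma> p \<otimes>\<^bsub>A\<^esub> a" using fracE[OF a] by blast
    obtain t' r' where tr: "t' \<in> T" "r' \<in> carrier R" "t' \<otimes>\<^bsub>R\<^esub> v = r' \<otimes>\<^bsub>R\<^esub> t"
      using d(5) pv(2) t(1) by blast
    have pc: "p \<in> carrier R" using pv S_car by auto
    have q: "\<sigma> t' \<otimes>\<^bsub>A\<^esub> \<sigma> p \<in> genW A (\<sigma> ` T)"
      using genW.gen[OF _ genW.unit[OF unitS[OF pv(1)] genW.one]] tr(1) pc by auto
    have "(\<sigma> t' \<otimes>\<^bsub>A\<^esub> \<sigma> p) \<otimes>\<^bsub>A\<^esub> a = \<sigma> t' \<otimes>\<^bsub>A\<^esub> \<sigma> v"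
      using pv pc a Tc[OF tr(1)] by (simp add: A.m_assoc)
    also have "\<dots> = \<sigma> r' \<otimes>\<^bsub>A\<^esub> g" using tr t Tc pv(2) by (metis h.hom_mult)
    finally show "\<exists>q\<in>genW A (\<sigma> ` T). \<exists>c\<in>carrier A. q \<otimes>\<^bsub>A\<^esub> a = c \<otimes>\<^bsub>A\<^esub> g"
      using q h.hom_closed[OF tr(2)] by blast
  qed
  have Rev: "\<forall>g\<in>\<sigma> ` T. \<forall>y\<in>carrier A. y \<otimes>\<^bsub>A\<^esub> g = \<zero>\<^bsub>A\<^esub> \<longrightarrow> (\<exists>k\<in>{\<one>\<^bsub>A\<^esub>}. k \<otimes>\<^bsub>A\<^esub> y = \<zero>\<^bsub>A\<^esub>)"
  proof (intro ballI impI)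
    fix g y assume g: "g \<in> \<sigma> ` T" and y: "y \<in> carrier A" and yg: "y \<otimes>\<^bsub>A\<^esub> g = \<zero>\<^bsub>A\<^esub>"
    obtain t where t: "t \<in> T" "g = \<sigma> t" using g by auto
    have tc: "t \<in> carrier R" using Tc t by auto
    obtain p v where pv: "p \<in> S" "v \<in> carrier R" "\<sigma> v = \<sigma> p \<otimes>\<^bsub>A\<^esub> y" using fracE[OF y] by blast
    have pc: "p \<in> carrier R" using pv S_car by auto
    have "\<sigma> (v \<otimes>\<^bsub>R\<^esub> t) = \<sigma> p \<otimes>\<^bsub>A\<^esub> (y \<otimes>\<^bsub>A\<^esub> g)" using pv pc y tc t by (simp add: A.m_assoc)
    hence "\<sigma> (v \<otimes>\<^bsub>R\<^esub> t) = \<zero>\<^bsub>A\<^esub>" using yg pc by simp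
    hence "v \<otimes>\<^bsub>R\<^esub> t \<in> ass R S" using ker R.m_closed[OF pv(2) tc] by blast
    hence "v \<otimes>\<^bsub>R\<^esub> t \<in> ass R T" using assT by simp
    then obtain t' where t': "t' \<in> T" "t' \<otimes>\<^bsub>R\<^esub> (v \<otimes>\<^bsub>R\<^esub> t) = \<zero>\<^bsub>R\<^esub>" by (auto simp: ass_def)
    have t'c: "t' \<in> carrier R" using Tc t' by auto
    have "(t' \<otimes>\<^bsub>R\<^esub> v) \<otimes>\<^bsub>R\<^esub> t = \<zero>\<^bsub>R\<^esub>" using t' t'c pv(2) tc by (simp add: R.m_assoc)
    then obtain t'' where t'': "t'' \<in> T" "t'' \<otimes>\<^bsub>R\<^esub> (t' \<otimes>\<^bsub>R\<^esub> v) = \<zero>\<^bsub>R\<^esub>"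
      using d(6) t'c pv(2) t(1) by (meson R.m_closed)
    have "(t'' \<otimes>\<^bsub>R\<^esub> t') \<otimes>\<^bsub>R\<^esub> v = \<zero>\<^bsub>R\<^esub>" using t'' Tc t'c pv(2) by (simp add: R.m_assoc)
    hence "v \<in> ass R T" using d(4) t'' t' pv(2) by (auto simp: ass_def)
    hence "\<sigma> v = \<zero>\<^bsub>A\<^esub>" using ker pv(2) assT by simp
    hence "\<sigma> p \<otimes>\<^bsub>A\<^esub> y = \<zero>\<^bsub>A\<^esub>" using pv by simp
    hence "y = inv\<^bsub>A\<^esub> (\<sigma> p) \<otimes>\<^bsub>A\<^esub> \<zero>\<^bsub>A\<^esub>" using U1[OF unitS[OF pv(1)] y] by simp
    hence "y = \<zero>\<^bsub>A\<^esub>" using unitS[OF pv(1)] by simp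
    thus "\<exists>k\<in>{\<one>\<^bsub>A\<^esub>}. k \<otimes>\<^bsub>A\<^esub> y = \<zero>\<^bsub>A\<^esub>" by simp
  qed
  have eq: "{r \<in> carrier R. \<sigma> r \<in> genW A (\<sigma> ` T)} = S"
    by (rule GEN[where K="{\<one>\<^bsub>A\<^esub>}", OF _ _ _ _ _ Ore Rev])
      (use Tc in \<open>auto simp: genW.one one_ne_zero_A[symmetric]\<close>)
  show ?thesis using eq Tg Tc by auto
qed


abbreviation "aa \<equiv> ass R S"
abbreviation "Q \<equiv> R Quot aa"
abbreviation "pq \<equiv> a_r_coset R aa"

lemma aa_iff: "r \<in> aa \<longleftrightarrow> r \<in> carrier R \<and> (\<exists>s\<in>S. s \<otimes>\<^bsub>R\<^esub> r = \<zero>\<^bsub>R\<^esub>)"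
  by (auto simp: ass_def)

lemma aa_cancel: assumes "s \<in> S" "r \<in> carrier R" "s \<otimes>\<^bsub>R\<^esub> r \<in> aa" shows "r \<in> aa"
proof -
  obtain s' where s': "s' \<in> S" "s' \<otimes>\<^bsub>R\<^esub> (s \<otimes>\<^bsub>R\<^esub> r) = \<zero>\<^bsub>R\<^esub>" using assms(3) aa_iff by auto
  hence "(s' \<otimes>\<^bsub>R\<^esub> s) \<otimes>\<^bsub>R\<^esub> r = \<zero>\<^bsub>R\<^esub>" using assms S_car by (simp add: R.m_assoc)
  thus ?thesis using aa_iff S_mult s'(1) assms by blast
qed

lemma ideal_aa: "ideal aa R"
proof -
  have sub: "subgroup aa (add_monoid R)"
  proof (rule R.add.subgroupI, goal_cases)
    case 1 show ?case by (auto simp: ass_def)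
  next
    case 2 show ?case using one_S aa_iff by (metis R.r_null R.zero_closed S_car emptyE)
  next
    case (3 a)
    then obtain s where s: "s \<in> S" "s \<otimes>\<^bsub>R\<^esub> a = \<zero>\<^bsub>R\<^esub>" "a \<in> carrier R" using aa_iff by auto
    have "s \<otimes>\<^bsub>R\<^esub> (\<ominus>\<^bsub>R\<^esub> a) = \<zero>\<^bsub>R\<^esub>" using s S_car by (simp add: R.r_minus)
    thus ?case using s aa_iff by (auto simp: a_inv_def[symmetric])
  next
    case (4 a b)
    obtain s where s: "s \<in> S" "s \<otimes>\<^bsub>R\<^esub> a = \<zero>\<^bsub>R\<^esub>" "a \<in> carrier R" using 4 aa_iff by auto
    obtain s' where s': "s' \<in> S" "s' \<otimes>\<^bsub>R\<^esub> b = \<zero>\<^bsub>R\<^esub>" "b \<in> carrier R" using 4 aa_iff by auto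
    obtain s1 r1 where sr: "s1 \<in> S" "r1 \<in> carrier R" "s1 \<otimes>\<^bsub>R\<^esub> s = r1 \<otimes>\<^bsub>R\<^esub> s'"
      using S_Ore[OF S_car[OF s(1)] s'(1)] by blast
    have e: "(s1 \<otimes>\<^bsub>R\<^esub> s) \<otimes>\<^bsub>R\<^esub> b = (r1 \<otimes>\<^bsub>R\<^esub> s') \<otimes>\<^bsub>R\<^esub> b" using sr(3) by simp
    have "(s1 \<otimes>\<^bsub>R\<^esub> s) \<otimes>\<^bsub>R\<^esub> (a \<oplus>\<^bsub>R\<^esub> b) = (s1 \<otimes>\<^bsub>R\<^esub> s) \<otimes>\<^bsub>R\<^esub> a \<oplus>\<^bsub>R\<^esub> (s1 \<otimes>\<^bsub>R\<^esub> s) \<otimes>\<^bsub>R\<^esub> b"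
      using s s' sr(1,2) S_car by (simp add: R.r_distr)
    also have "\<dots> = (s1 \<otimes>\<^bsub>R\<^esub> s) \<otimes>\<^bsub>R\<^esub> a \<oplus>\<^bsub>R\<^esub> (r1 \<otimes>\<^bsub>R\<^esub> s') \<otimes>\<^bsub>R\<^esub> b" using e by simp
    also have "\<dots> = \<zero>\<^bsub>R\<^esub>" using s s' sr(1,2) S_car by (simp add: R.m_assoc)
    finally have "a \<oplus>\<^bsub>R\<^esub> b \<in> aa" using aa_iff S_mult[OF sr(1) s(1)] s s' by auto
    thus ?case by simp
  qed
  have lr: "x \<otimes>\<^bsub>R\<^esub> a \<in> aa \<and> a \<otimes>\<^bsub>R\<^esub> x \<in> aa" if a: "a \<in> aa" and x: "x \<in> carrier R" for a x
  proof -
  obtain s where s: "s \<in> S" "s \<otimes>\<^bsub>R\<^esub> a = \<zero>\<^bsub>R\<^esub>" "a \<in> carrier R" using a aa_iff by auto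
  obtain s1 r1 where sr: "s1 \<in> S" "r1 \<in> carrier R" "s1 \<otimes>\<^bsub>R\<^esub> x = r1 \<otimes>\<^bsub>R\<^esub> s"
    using S_Ore[OF x s(1)] by blast
  have "s1 \<otimes>\<^bsub>R\<^esub> (x \<otimes>\<^bsub>R\<^esub> a) = (r1 \<otimes>\<^bsub>R\<^esub> s) \<otimes>\<^bsub>R\<^esub> a"
    using s sr x S_car by (metis R.m_assoc)
  also have "\<dots> = \<zero>\<^bsub>R\<^esub>" using s sr(1,2) S_car by (simp add: R.m_assoc)
  finally have "s1 \<otimes>\<^bsub>R\<^esub> (x \<otimes>\<^bsub>R\<^esub> a) = \<zero>\<^bsub>R\<^esub>" .
  hence 1: "x \<otimes>\<^bsub>R\<^esub> a \<in> aa" using s sr x aa_iff by auto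
  have "s \<otimes>\<^bsub>R\<^esub> (a \<otimes>\<^bsub>R\<^esub> x) = \<zero>\<^bsub>R\<^esub>" using s x S_car by (simp add: R.m_assoc[symmetric])
  thus ?thesis using 1 s x aa_iff by auto
  qed
  show ?thesis
    apply (rule idealI[of R aa])
       apply (rule R.ring_axioms)
      apply (rule sub)
     apply (simp add: lr)
    apply (simp add: lr)
    done
qed

interpretation I: ideal aa R by (rule ideal_aa)

lemma ringQ: "ring Q" by (rule I.quotient_is_ring)

lemma pq_hom: "pq \<in> ring_hom R Q" by (rule I.rcos_ring_hom)

lemma pq_mult: "x \<in> carrier R \<Longrightarrow> y \<in> carrier R \<Longrightarrow> pq (x \<otimes>\<^bsub>R\<^esub> y) = pq x \<otimes>\<^bsub>Q\<^esub> pq y"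
  by (rule ring_hom_mult[OF pq_hom])

lemma pq_add: "x \<in> carrier R \<Longrightarrow> y \<in> carrier R \<Longrightarrow> pq (x \<oplus>\<^bsub>R\<^esub> y) = pq x \<oplus>\<^bsub>Q\<^esub> pq y"
  by (rule ring_hom_add[OF pq_hom])

lemma pq_one: "pq \<one>\<^bsub>R\<^esub> = \<one>\<^bsub>Q\<^esub>"
  by (rule ring_hom_one[OF pq_hom])

lemma pq_closed: "x \<in> carrier R \<Longrightarrow> pq x \<in> carrier Q"
  by (rule ring_hom_closed[OF pq_hom])

lemma zeroQ: "\<zero>\<^bsub>Q\<^esub> = aa" by (simp add: FactRing_def)

lemma pi_zero_iff: assumes r: "r \<in> carrier R" shows "pq r = \<zero>\<^bsub>Q\<^esub> \<longleftrightarrow> r \<in> aa"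
  unfolding zeroQ using I.rcos_const_imp_mem[OF r] R.a_rcos_zero[OF ideal_aa, of r] by blast

lemma carQ: "xx \<in> carrier Q \<Longrightarrow> \<exists>r\<in>carrier R. xx = pq r"
  by (auto simp: FactRing_def A_RCOSETS_def RCOSETS_def a_r_coset_def)

lemma pi_eq: assumes "x \<in> carrier R" "y \<in> carrier R" "pq x = pq y" shows "\<sigma> x = \<sigma> y"
proof -
  have "x \<in> pq y" using I.a_rcos_self[OF assms(1)] assms(3) by simp
  then obtain h where h: "h \<in> aa" "x = h \<oplus>\<^bsub>R\<^esub> y" by (auto simp: a_r_coset_def')
  have hc: "h \<in> carrier R" using h(1) aa_iff by auto
  have h0: "\<sigma> h = \<zero>\<^bsub>A\<^esub>" using h(1) ker[OF hc] by simp
  have "\<sigma> x = \<sigma> h \<oplus>\<^bsub>A\<^esub> \<sigma> y" using h(2) hc assms(2) by simp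
  thus ?thesis using h0 assms(2) by simp
qed

lemma pi_S_iff: "r \<in> carrier R \<Longrightarrow> pq r \<in> pq ` S \<longleftrightarrow> r \<in> S"
proof
  assume r: "r \<in> carrier R" and "pq r \<in> pq ` S"
  then obtain s where s: "s \<in> S" "pq r = pq s" by auto
  hence "\<sigma> r = \<sigma> s" using pi_eq[OF r S_car[OF s(1)]] by simp
  hence "\<sigma> r \<in> Units A" using unitS[OF s(1)] by simp
  hence "r \<in> {r \<in> carrier R. \<sigma> r \<in> Units A}" using r by simp
  thus "r \<in> S" using S_units by simp
qed auto


lemma piS_den: "pq ` S \<in> Den_l Q"
proof (rule den_intro)
  show "pq ` S \<subseteq> carrier Q" using pq_closed S_car by auto
  show "\<one>\<^bsub>Q\<^esub> \<in> pq ` S" using pq_one one_S by (metis image_eqI)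
  show "\<zero>\<^bsub>Q\<^esub> \<notin> pq ` S"
  proof
    assume "\<zero>\<^bsub>Q\<^esub> \<in> pq ` S"
    then obtain s where s: "s \<in> S" "pq s = \<zero>\<^bsub>Q\<^esub>" by auto
    hence "s \<in> aa" using pi_zero_iff S_car by auto
    then obtain s' where "s' \<in> S" "s' \<otimes>\<^bsub>R\<^esub> s = \<zero>\<^bsub>R\<^esub>" using aa_iff by auto
    thus False using S_mult s(1) zero_S by metis
  qed
  show "\<forall>x\<in>pq ` S. \<forall>y\<in>pq ` S. x \<otimes>\<^bsub>Q\<^esub> y \<in> pq ` S"
  proof (intro ballI)
    fix x y assume "x \<in> pq ` S" "y \<in> pq ` S"
    then obtain s t where "s \<in> S" "t \<in> S" "x = pq s" "y = pq t" by auto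
    thus "x \<otimes>\<^bsub>Q\<^esub> y \<in> pq ` S" using pq_mult[of s t] S_car S_mult by (metis image_eqI)
  qed
  show "\<forall>r\<in>carrier Q. \<forall>s\<in>pq ` S. \<exists>s'\<in>pq ` S. \<exists>r'\<in>carrier Q. s' \<otimes>\<^bsub>Q\<^esub> r = r' \<otimes>\<^bsub>Q\<^esub> s"
  proof (intro ballI)
    fix XX YY assume XX: "XX \<in> carrier Q" and YY: "YY \<in> pq ` S"
    obtain r where r: "r \<in> carrier R" "XX = pq r" using carQ[OF XX] by blast
    obtain s where s: "s \<in> S" "YY = pq s" using YY by auto
    obtain s' r' where sr: "s' \<in> S" "r' \<in> carrier R" "s' \<otimes>\<^bsub>R\<^esub> r = r' \<otimes>\<^bsub>R\<^esub> s"
      using S_Ore[OF r(1) s(1)] by blast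
    have "pq s' \<otimes>\<^bsub>Q\<^esub> XX = pq r' \<otimes>\<^bsub>Q\<^esub> YY"
      using sr r s S_car pq_mult by metis
    thus "\<exists>s'\<in>pq ` S. \<exists>r'\<in>carrier Q. s' \<otimes>\<^bsub>Q\<^esub> XX = r' \<otimes>\<^bsub>Q\<^esub> YY"
      using sr pq_closed by blast
  qed
  show "\<forall>r\<in>carrier Q. \<forall>s\<in>pq ` S. r \<otimes>\<^bsub>Q\<^esub> s = \<zero>\<^bsub>Q\<^esub> \<longrightarrow> (\<exists>t\<in>pq ` S. t \<otimes>\<^bsub>Q\<^esub> r = \<zero>\<^bsub>Q\<^esub>)"
  proof (intro ballI impI)
    fix XX YY assume XX: "XX \<in> carrier Q" and YY: "YY \<in> pq ` S" and XY: "XX \<otimes>\<^bsub>Q\<^esub> YY = \<zero>\<^bsub>Q\<^esub>"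
    obtain r where r: "r \<in> carrier R" "XX = pq r" using carQ[OF XX] by blast
    obtain s where s: "s \<in> S" "YY = pq s" using YY by auto
    have sc: "s \<in> carrier R" using s S_car by auto
    have "pq (r \<otimes>\<^bsub>R\<^esub> s) = \<zero>\<^bsub>Q\<^esub>" using XY r s sc pq_mult by simp
    hence "r \<otimes>\<^bsub>R\<^esub> s \<in> aa" using pi_zero_iff r sc by simp
    then obtain s' where s': "s' \<in> S" "s' \<otimes>\<^bsub>R\<^esub> (r \<otimes>\<^bsub>R\<^esub> s) = \<zero>\<^bsub>R\<^esub>" using aa_iff by auto
    have s'c: "s' \<in> carrier R" using s' S_car by auto
    have "(s' \<otimes>\<^bsub>R\<^esub> r) \<otimes>\<^bsub>R\<^esub> s = \<zero>\<^bsub>R\<^esub>" using s' s'c r sc by (simp add: R.m_assoc)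
    then obtain s'' where s'': "s'' \<in> S" "s'' \<otimes>\<^bsub>R\<^esub> (s' \<otimes>\<^bsub>R\<^esub> r) = \<zero>\<^bsub>R\<^esub>"
      using S_rev s(1) s'c r(1) by (meson R.m_closed)
    have s''c: "s'' \<in> carrier R" using s'' S_car by auto
    have e: "(s'' \<otimes>\<^bsub>R\<^esub> s') \<otimes>\<^bsub>R\<^esub> r = \<zero>\<^bsub>R\<^esub>" using s'' s''c s'c r by (simp add: R.m_assoc)
    have "pq (s'' \<otimes>\<^bsub>R\<^esub> s') \<otimes>\<^bsub>Q\<^esub> XX = pq ((s'' \<otimes>\<^bsub>R\<^esub> s') \<otimes>\<^bsub>R\<^esub> r)"
      using pq_mult s''c s'c r by simp
    also have "\<dots> = \<zero>\<^bsub>Q\<^esub>" using e pi_zero_iff[of "\<zero>\<^bsub>R\<^esub>"] aa_iff one_S S_car by auto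
    finally show "\<exists>t\<in>pq ` S. t \<otimes>\<^bsub>Q\<^esub> XX = \<zero>\<^bsub>Q\<^esub>" using S_mult s'' s' by blast
  qed
qed

lemma ass_piS: "ass Q (pq ` S) = {\<zero>\<^bsub>Q\<^esub>}"
proof
  show "{\<zero>\<^bsub>Q\<^esub>} \<subseteq> ass Q (pq ` S)"
  proof -
    interpret Qr: ring Q by (rule ringQ)
    have "pq \<one>\<^bsub>R\<^esub> \<otimes>\<^bsub>Q\<^esub> \<zero>\<^bsub>Q\<^esub> = \<zero>\<^bsub>Q\<^esub>" using pq_closed[of "\<one>\<^bsub>R\<^esub>"] by simp
    moreover have "pq \<one>\<^bsub>R\<^esub> \<in> pq ` S" using one_S by simp
    ultimately have "\<zero>\<^bsub>Q\<^esub> \<in> ass Q (pq ` S)" unfolding ass_def[of Q] using Qr.zero_closed by blast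
    thus ?thesis by simp
  qed
  show "ass Q (pq ` S) \<subseteq> {\<zero>\<^bsub>Q\<^esub>}"
  proof
    fix XX assume "XX \<in> ass Q (pq ` S)"
    then obtain s where XX: "XX \<in> carrier Q" "s \<in> S" "pq s \<otimes>\<^bsub>Q\<^esub> XX = \<zero>\<^bsub>Q\<^esub>" unfolding ass_def[of Q] by blast
    obtain r where r: "r \<in> carrier R" "XX = pq r" using carQ[OF XX(1)] by blast
    have sc: "s \<in> carrier R" using XX S_car by auto
    have "pq (s \<otimes>\<^bsub>R\<^esub> r) = \<zero>\<^bsub>Q\<^esub>" using XX r sc pq_mult by simp
    hence "s \<otimes>\<^bsub>R\<^esub> r \<in> aa" using pi_zero_iff r sc by simp
    hence "r \<in> aa" using aa_cancel XX(2) r(1) by blast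
    thus "XX \<in> {\<zero>\<^bsub>Q\<^esub>}" using pi_zero_iff r by simp
  qed
qed


lemma Q_largest:
  assumes T: "T \<in> Den_l Q" and assT: "ass Q T = {\<zero>\<^bsub>Q\<^esub>}"
  shows "T \<subseteq> pq ` S"
proof -
  note d = den_facts[OF T]
  define G where "G = \<sigma> ` {x \<in> carrier R. pq x \<in> T}"
  have Gc: "G \<subseteq> carrier A" unfolding G_def by auto
  have Tg: "G \<subseteq> genW A G"
  proof
    fix g assume g: "g \<in> G"
    have "g \<otimes>\<^bsub>A\<^esub> \<one>\<^bsub>A\<^esub> \<in> genW A G" by (rule genW.gen[OF g genW.one])
    thus "g \<in> genW A G" using g Gc by auto
  qed
  have Ore: "\<forall>g\<in>G. \<forall>a\<in>carrier A. \<exists>q\<in>genW A G. \<exists>c\<in>carrier A. q \<otimes>\<^bsub>A\<^esub> a = c \<otimes>\<^bsub>A\<^esub> g"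
  proof (intro ballI)
    fix g a assume g: "g \<in> G" and a: "a \<in> carrier A"
    obtain x where x: "x \<in> carrier R" "pq x \<in> T" "g = \<sigma> x" using g G_def by auto
    obtain p v where pv: "p \<in> S" "v \<in> carrier R" "\<sigma> v = \<sigma> p \<otimes>\<^bsub>A\<^esub> a" using fracE[OF a] by blast
    have pc: "p \<in> carrier R" using pv S_car by auto
    obtain t' \<rho> where tr: "t' \<in> T" "\<rho> \<in> carrier Q" "t' \<otimes>\<^bsub>Q\<^esub> pq v = \<rho> \<otimes>\<^bsub>Q\<^esub> pq x"
      using d(5) pq_closed[OF pv(2)] x(2) by blast
    have t'c: "t' \<in> carrier Q" using d(1) tr(1) by auto
    obtain y where y: "y \<in> carrier R" "t' = pq y" using carQ[OF t'c] by blast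
    obtain z where z: "z \<in> carrier R" "\<rho> = pq z" using carQ[OF tr(2)] by blast
    have "pq (y \<otimes>\<^bsub>R\<^esub> v) = pq (z \<otimes>\<^bsub>R\<^esub> x)"
      using tr(3) by (simp only: pq_mult[OF y(1) pv(2)] pq_mult[OF z(1) x(1)] y(2) z(2))
    hence e: "\<sigma> (y \<otimes>\<^bsub>R\<^esub> v) = \<sigma> (z \<otimes>\<^bsub>R\<^esub> x)"
      by (rule pi_eq[OF R.m_closed[OF y(1) pv(2)] R.m_closed[OF z(1) x(1)]])
    have yG: "\<sigma> y \<in> G" unfolding G_def using y tr(1) by auto
    have q: "\<sigma> y \<otimes>\<^bsub>A\<^esub> (\<sigma> p \<otimes>\<^bsub>A\<^esub> \<one>\<^bsub>A\<^esub>) \<in> genW A G"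
      by (rule genW.gen[OF yG genW.unit[OF unitS[OF pv(1)] genW.one]])
    have "(\<sigma> y \<otimes>\<^bsub>A\<^esub> (\<sigma> p \<otimes>\<^bsub>A\<^esub> \<one>\<^bsub>A\<^esub>)) \<otimes>\<^bsub>A\<^esub> a = \<sigma> y \<otimes>\<^bsub>A\<^esub> (\<sigma> p \<otimes>\<^bsub>A\<^esub> a)"
      using y pc a by (simp add: A.m_assoc)
    also have "\<dots> = \<sigma> (y \<otimes>\<^bsub>R\<^esub> v)" using pv(3) y pv(2) by simp
    also have "\<dots> = \<sigma> z \<otimes>\<^bsub>A\<^esub> g" using e z x by simp
    finally show "\<exists>q\<in>genW A G. \<exists>c\<in>carrier A. q \<otimes>\<^bsub>A\<^esub> a = c \<otimes>\<^bsub>A\<^esub> g"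
      using q h.hom_closed[OF z(1)] by blast
  qed
  have Rev: "\<forall>g\<in>G. \<forall>y\<in>carrier A. y \<otimes>\<^bsub>A\<^esub> g = \<zero>\<^bsub>A\<^esub> \<longrightarrow> (\<exists>k\<in>{\<one>\<^bsub>A\<^esub>}. k \<otimes>\<^bsub>A\<^esub> y = \<zero>\<^bsub>A\<^esub>)"
  proof (intro ballI impI)
    fix g y assume g: "g \<in> G" and y: "y \<in> carrier A" and yg: "y \<otimes>\<^bsub>A\<^esub> g = \<zero>\<^bsub>A\<^esub>"
    obtain x where x: "x \<in> carrier R" "pq x \<in> T" "g = \<sigma> x" using g G_def by auto
    obtain p v where pv: "p \<in> S" "v \<in> carrier R" "\<sigma> v = \<sigma> p \<otimes>\<^bsub>A\<^esub> y" using fracE[OF y] by blast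
    have pc: "p \<in> carrier R" using pv S_car by auto
    have "\<sigma> (v \<otimes>\<^bsub>R\<^esub> x) = \<sigma> p \<otimes>\<^bsub>A\<^esub> (y \<otimes>\<^bsub>A\<^esub> g)" using pv pc y x by (simp add: A.m_assoc)
    hence "\<sigma> (v \<otimes>\<^bsub>R\<^esub> x) = \<zero>\<^bsub>A\<^esub>" using yg pc by simp
    hence "v \<otimes>\<^bsub>R\<^esub> x \<in> aa" using ker R.m_closed[OF pv(2) x(1)] by blast
    hence "pq (v \<otimes>\<^bsub>R\<^esub> x) = \<zero>\<^bsub>Q\<^esub>" using pi_zero_iff R.m_closed[OF pv(2) x(1)] by blast
    hence "pq v \<otimes>\<^bsub>Q\<^esub> pq x = \<zero>\<^bsub>Q\<^esub>" using pq_mult pv(2) x(1) by simp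
    then obtain t where t: "t \<in> T" "t \<otimes>\<^bsub>Q\<^esub> pq v = \<zero>\<^bsub>Q\<^esub>" using d(6) pq_closed[OF pv(2)] x(2) by blast
    hence "pq v \<in> ass Q T" unfolding ass_def[of Q] using pq_closed[OF pv(2)] by blast
    hence "pq v = \<zero>\<^bsub>Q\<^esub>" using assT by simp
    hence "v \<in> aa" using pi_zero_iff pv(2) by blast
    hence "\<sigma> v = \<zero>\<^bsub>A\<^esub>" using ker pv(2) by blast
    hence "\<sigma> p \<otimes>\<^bsub>A\<^esub> y = \<zero>\<^bsub>A\<^esub>" using pv by simp
    hence "y = inv\<^bsub>A\<^esub> (\<sigma> p) \<otimes>\<^bsub>A\<^esub> \<zero>\<^bsub>A\<^esub>" using U1[OF unitS[OF pv(1)] y] by simp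
    hence "y = \<zero>\<^bsub>A\<^esub>" using unitS[OF pv(1)] by simp
    thus "\<exists>k\<in>{\<one>\<^bsub>A\<^esub>}. k \<otimes>\<^bsub>A\<^esub> y = \<zero>\<^bsub>A\<^esub>" by simp
  qed
  have eq: "{r \<in> carrier R. \<sigma> r \<in> genW A G} = S"
    by (rule GEN[where K="{\<one>\<^bsub>A\<^esub>}", OF Gc _ _ _ _ Ore Rev])
      (auto simp: genW.one one_ne_zero_A[symmetric])
  show ?thesis
  proof
    fix t assume t: "t \<in> T"
    obtain x where x: "x \<in> carrier R" "t = pq x" using carQ d(1) t by blast
    have "\<sigma> x \<in> G" unfolding G_def using x t by auto
    hence "\<sigma> x \<in> genW A G" using Tg by blast
    hence "x \<in> S" using eq x(1) by blast
    thus "t \<in> pq ` S" using x by simp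
  qed
qed

lemma S0Q: "S0 Q = pq ` S"
  unfolding S0_def
proof (rule S_ass_eq)
  show "pq ` S \<in> Den_l_ass Q {\<zero>\<^bsub>Q\<^esub>}" using piS_den ass_piS by (simp add: Den_l_ass_def)
  show "\<forall>T\<in>Den_l_ass Q {\<zero>\<^bsub>Q\<^esub>}. T \<subseteq> pq ` S" using Q_largest by (simp add: Den_l_ass_def)
qed

lemma S_Sass: "S = S_ass R aa"
proof (rule S_ass_eq[symmetric])
  show "S \<in> Den_l_ass R aa" using maxS by (simp add: Den_l_ass_def maxDen_l_def)
  show "\<forall>T\<in>Den_l_ass R aa. T \<subseteq> S" using S_largest by (simp add: Den_l_ass_def)
qed

lemma units_den: "Units A \<in> Den_l A"
proof (rule den_intro)
  show "Units A \<subseteq> carrier A" by auto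
  show "\<one>\<^bsub>A\<^esub> \<in> Units A" by simp
  show "\<zero>\<^bsub>A\<^esub> \<notin> Units A" by (rule zero_not_unit)
  show "\<forall>s\<in>Units A. \<forall>t\<in>Units A. s \<otimes>\<^bsub>A\<^esub> t \<in> Units A" by simp
  show "\<forall>r\<in>carrier A. \<forall>s\<in>Units A. \<exists>s'\<in>Units A. \<exists>r'\<in>carrier A. s' \<otimes>\<^bsub>A\<^esub> r = r' \<otimes>\<^bsub>A\<^esub> s"
  proof (intro ballI)
    fix r s assume r: "r \<in> carrier A" and s: "s \<in> Units A"
    have "\<one>\<^bsub>A\<^esub> \<otimes>\<^bsub>A\<^esub> r = (r \<otimes>\<^bsub>A\<^esub> inv\<^bsub>A\<^esub> s) \<otimes>\<^bsub>A\<^esub> s"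
      using r s A.Units_closed[OF s] by (simp add: A.m_assoc)
    thus "\<exists>s'\<in>Units A. \<exists>r'\<in>carrier A. s' \<otimes>\<^bsub>A\<^esub> r = r' \<otimes>\<^bsub>A\<^esub> s" using r s by blast
  qed
  show "\<forall>r\<in>carrier A. \<forall>s\<in>Units A. r \<otimes>\<^bsub>A\<^esub> s = \<zero>\<^bsub>A\<^esub> \<longrightarrow> (\<exists>t\<in>Units A. t \<otimes>\<^bsub>A\<^esub> r = \<zero>\<^bsub>A\<^esub>)"
  proof (intro ballI impI)
    fix r s assume r: "r \<in> carrier A" and s: "s \<in> Units A" and rs: "r \<otimes>\<^bsub>A\<^esub> s = \<zero>\<^bsub>A\<^esub>"
    have "r = (r \<otimes>\<^bsub>A\<^esub> s) \<otimes>\<^bsub>A\<^esub> inv\<^bsub>A\<^esub> s" using r s A.Units_closed[OF s] by (simp add: A.m_assoc)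
    hence "r = \<zero>\<^bsub>A\<^esub>" using rs s by simp
    thus "\<exists>t\<in>Units A. t \<otimes>\<^bsub>A\<^esub> r = \<zero>\<^bsub>A\<^esub>" by (intro bexI[of _ "\<one>\<^bsub>A\<^esub>"]) auto
  qed
qed

lemma ass_sub_units: assumes "T \<subseteq> Units A" "\<one>\<^bsub>A\<^esub> \<in> T" shows "ass A T = {\<zero>\<^bsub>A\<^esub>}"
proof
  show "ass A T \<subseteq> {\<zero>\<^bsub>A\<^esub>}"
  proof
    fix x assume "x \<in> ass A T"
    then obtain t where t: "x \<in> carrier A" "t \<in> T" "t \<otimes>\<^bsub>A\<^esub> x = \<zero>\<^bsub>A\<^esub>" unfolding ass_def by blast
    have tu: "t \<in> Units A" using assms t by auto
    have "x = inv\<^bsub>A\<^esub> t \<otimes>\<^bsub>A\<^esub> (t \<otimes>\<^bsub>A\<^esub> x)" using tu t(1) A.Units_closed[OF tu] A.Units_inv_closed[OF tu] by (simp add: A.m_assoc[symmetric])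
    thus "x \<in> {\<zero>\<^bsub>A\<^esub>}" using t tu by simp
  qed
  show "{\<zero>\<^bsub>A\<^esub>} \<subseteq> ass A T" using assms(2) unfolding ass_def
    by (auto intro!: bexI[of _ "\<one>\<^bsub>A\<^esub>"])
qed

lemma S0A: "S0 A = Units A"
  unfolding S0_def
proof (rule S_ass_eq)
  show "Units A \<in> Den_l_ass A {\<zero>\<^bsub>A\<^esub>}"
    using units_den ass_sub_units[of "Units A"] by (simp add: Den_l_ass_def)
  show "\<forall>T\<in>Den_l_ass A {\<zero>\<^bsub>A\<^esub>}. T \<subseteq> Units A" using Den_A_units by (simp add: Den_l_ass_def)
qed


lemma tau_ex: "\<exists>\<tau>. (\<forall>r\<in>carrier R. \<tau> (pq r) = \<sigma> r) \<and> is_left_loc Q (pq ` S) A \<tau>"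
proof -
  define tau where "tau XX = \<sigma> (SOME r. r \<in> carrier R \<and> XX = pq r)" for XX
  have tp: "tau (pq r) = \<sigma> r" if r: "r \<in> carrier R" for r
  proof -
    define r' where "r' = (SOME r'. r' \<in> carrier R \<and> pq r = pq r')"
    have "r' \<in> carrier R \<and> pq r = pq r'" unfolding r'_def by (rule someI[of _ r]) (use r in simp)
    hence "\<sigma> r = \<sigma> r'" using pi_eq r by blast
    thus ?thesis unfolding tau_def r'_def by simp
  qed
  have hom: "tau \<in> ring_hom Q A"
  proof (rule ring_hom_memI)
    fix XX assume "XX \<in> carrier Q"
    then obtain r where r: "r \<in> carrier R" "XX = pq r" using carQ by blast
    thus "tau XX \<in> carrier A" using tp by simp
  next
    fix XX YY assume "XX \<in> carrier Q" "YY \<in> carrier Q"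
    then obtain x y where xy: "x \<in> carrier R" "XX = pq x" "y \<in> carrier R" "YY = pq y" using carQ by metis
    have "XX \<otimes>\<^bsub>Q\<^esub> YY = pq (x \<otimes>\<^bsub>R\<^esub> y)" using pq_mult[OF xy(1,3)] xy by simp
    thus "tau (XX \<otimes>\<^bsub>Q\<^esub> YY) = tau XX \<otimes>\<^bsub>A\<^esub> tau YY" using tp xy by simp
  next
    fix XX YY assume "XX \<in> carrier Q" "YY \<in> carrier Q"
    then obtain x y where xy: "x \<in> carrier R" "XX = pq x" "y \<in> carrier R" "YY = pq y" using carQ by metis
    have "XX \<oplus>\<^bsub>Q\<^esub> YY = pq (x \<oplus>\<^bsub>R\<^esub> y)" using pq_add[OF xy(1,3)] xy by simp
    thus "tau (XX \<oplus>\<^bsub>Q\<^esub> YY) = tau XX \<oplus>\<^bsub>A\<^esub> tau YY" using tp xy by simp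
  next
    show "tau \<one>\<^bsub>Q\<^esub> = \<one>\<^bsub>A\<^esub>" using tp[of "\<one>\<^bsub>R\<^esub>"] pq_one by simp
  qed
  have "is_left_loc Q (pq ` S) A tau"
    unfolding is_left_loc_def
  proof (intro conjI ballI)
    show "ring A" by (rule A.ring_axioms)
    show "tau \<in> ring_hom Q A" by (rule hom)
  next
    fix XX assume "XX \<in> pq ` S"
    then obtain s where "s \<in> S" "XX = pq s" by auto
    thus "tau XX \<in> Units A" using tp unitS S_car by simp
  next
    fix a assume a: "a \<in> carrier A"
    obtain s r where sr: "s \<in> S" "r \<in> carrier R" "a = inv\<^bsub>A\<^esub> (\<sigma> s) \<otimes>\<^bsub>A\<^esub> \<sigma> r" using frac[OF a] by blast
    have "a = inv\<^bsub>A\<^esub> (tau (pq s)) \<otimes>\<^bsub>A\<^esub> tau (pq r)" using sr tp S_car by simp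
    thus "\<exists>s\<in>pq ` S. \<exists>r\<in>carrier Q. a = inv\<^bsub>A\<^esub> (tau s) \<otimes>\<^bsub>A\<^esub> tau r"
      using sr pq_closed by blast
  next
    fix XX assume XX: "XX \<in> carrier Q"
    then obtain r where r: "r \<in> carrier R" "XX = pq r" using carQ by blast
    have "tau XX = \<zero>\<^bsub>A\<^esub> \<longleftrightarrow> r \<in> aa" using tp r ker by simp
    also have "\<dots> \<longleftrightarrow> XX = \<zero>\<^bsub>Q\<^esub>" using pi_zero_iff r by simp
    also have "\<dots> \<longleftrightarrow> XX \<in> ass Q (pq ` S)" using ass_piS by simp
    finally show "tau XX = \<zero>\<^bsub>A\<^esub> \<longleftrightarrow> XX \<in> ass Q (pq ` S)" .
  qed
  thus ?thesis using tp by blast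
qed

lemma units_frac: "Units A = {inv\<^bsub>A\<^esub> (\<sigma> s) \<otimes>\<^bsub>A\<^esub> \<sigma> t |s t. s \<in> S \<and> t \<in> S}"
proof
  show "Units A \<subseteq> {inv\<^bsub>A\<^esub> (\<sigma> s) \<otimes>\<^bsub>A\<^esub> \<sigma> t |s t. s \<in> S \<and> t \<in> S}"
  proof
    fix u assume u: "u \<in> Units A"
    have uc: "u \<in> carrier A" using u by auto
    obtain p v where pv: "p \<in> S" "v \<in> carrier R" "\<sigma> v = \<sigma> p \<otimes>\<^bsub>A\<^esub> u" using fracE[OF uc] by blast
    have "\<sigma> v \<in> Units A" using pv unitS u by simp
    hence "v \<in> S" using S_units pv(2) by blast
    moreover have "u = inv\<^bsub>A\<^esub> (\<sigma> p) \<otimes>\<^bsub>A\<^esub> \<sigma> v"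
      using U1[OF unitS[OF pv(1)] uc h.hom_closed[OF pv(2)]] pv(3) by simp
    ultimately show "u \<in> {inv\<^bsub>A\<^esub> (\<sigma> s) \<otimes>\<^bsub>A\<^esub> \<sigma> t |s t. s \<in> S \<and> t \<in> S}" using pv(1) by blast
  qed
  show "{inv\<^bsub>A\<^esub> (\<sigma> s) \<otimes>\<^bsub>A\<^esub> \<sigma> t |s t. s \<in> S \<and> t \<in> S} \<subseteq> Units A"
    using unitS by auto
qed

lemma units_gen: "Units A = generate (units_of A) (\<sigma> ` S \<union> (\<lambda>s. inv\<^bsub>A\<^esub> (\<sigma> s)) ` S)"
proof
  have G: "group (units_of A)" by (rule A.units_group)
  have H: "\<sigma> ` S \<union> (\<lambda>s. inv\<^bsub>A\<^esub> (\<sigma> s)) ` S \<subseteq> carrier (units_of A)"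
    using unitS by (auto simp: units_of_carrier)
  show "generate (units_of A) (\<sigma> ` S \<union> (\<lambda>s. inv\<^bsub>A\<^esub> (\<sigma> s)) ` S) \<subseteq> Units A"
    using group.generate_incl[OF G H] by (simp add: units_of_carrier)
  show "Units A \<subseteq> generate (units_of A) (\<sigma> ` S \<union> (\<lambda>s. inv\<^bsub>A\<^esub> (\<sigma> s)) ` S)"
  proof
    fix u assume "u \<in> Units A"
    then obtain s t where st: "s \<in> S" "t \<in> S" "u = inv\<^bsub>A\<^esub> (\<sigma> s) \<otimes>\<^bsub>A\<^esub> \<sigma> t"
      using units_frac by blast
    have 1: "inv\<^bsub>A\<^esub> (\<sigma> s) \<in> generate (units_of A) (\<sigma> ` S \<union> (\<lambda>s. inv\<^bsub>A\<^esub> (\<sigma> s)) ` S)"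
      by (rule generate.incl) (use st in blast)
    have 2: "\<sigma> t \<in> generate (units_of A) (\<sigma> ` S \<union> (\<lambda>s. inv\<^bsub>A\<^esub> (\<sigma> s)) ` S)"
      by (rule generate.incl) (use st in blast)
    have "inv\<^bsub>A\<^esub> (\<sigma> s) \<otimes>\<^bsub>units_of A\<^esub> \<sigma> t \<in> generate (units_of A) (\<sigma> ` S \<union> (\<lambda>s. inv\<^bsub>A\<^esub> (\<sigma> s)) ` S)"
      by (rule generate.eng[OF 1 2])
    thus "u \<in> generate (units_of A) (\<sigma> ` S \<union> (\<lambda>s. inv\<^bsub>A\<^esub> (\<sigma> s)) ` S)"
      using st by (simp add: units_of_mult)
  qed
qed

lemma loc_A: "is_left_loc A (S0 A) A (\<lambda>x. x)"
  unfolding is_left_loc_def S0A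
proof (intro conjI ballI)
  show "ring A" by (rule A.ring_axioms)
  show "(\<lambda>x. x) \<in> ring_hom A A" by (rule ring_hom_memI) auto
next
  fix s assume "s \<in> Units A" thus "s \<in> Units A" .
next
  fix a assume a: "a \<in> carrier A"
  have "a = inv\<^bsub>A\<^esub> \<one>\<^bsub>A\<^esub> \<otimes>\<^bsub>A\<^esub> a" using a by simp
  thus "\<exists>s\<in>Units A. \<exists>r\<in>carrier A. a = inv\<^bsub>A\<^esub> s \<otimes>\<^bsub>A\<^esub> r" using a by blast
next
  fix r assume "r \<in> carrier A"
  thus "r = \<zero>\<^bsub>A\<^esub> \<longleftrightarrow> r \<in> ass A (Units A)" using ass_sub_units[of "Units A"] by simp
qed

lemma Ass_A: "Ass_l A = {{\<zero>\<^bsub>A\<^esub>}}"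
proof -
  have "\<And>T. T \<in> Den_l A \<Longrightarrow> ass A T = {\<zero>\<^bsub>A\<^esub>}"
    using Den_A_units den_facts(2) ass_sub_units by blast
  thus ?thesis unfolding Ass_l_def using units_den by blast
qed

lemma S0A_img: "S0 A \<inter> \<sigma> ` carrier R = {\<sigma> r |r. r \<in> carrier R \<and> pq r \<in> S0 Q}"
proof -
  have "S0 A \<inter> \<sigma> ` carrier R = \<sigma> ` S"
    using S0A S_units S_car by auto
  also have "\<dots> = {\<sigma> r |r. r \<in> carrier R \<and> pq r \<in> S0 Q}"
  proof -
    have i: "\<And>r. r \<in> carrier R \<Longrightarrow> pq r \<in> S0 Q \<longleftrightarrow> r \<in> S" using S0Q pi_S_iff by simp
    show ?thesis using i S_car by blast
  qed
  finally show ?thesis .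
qed

end

theorem theorem3p9:
  fixes R :: "('a,'m) ring_scheme" and A :: "('b,'n) ring_scheme"
    and S :: "'a set" and \<sigma> :: "'a \<Rightarrow> 'b"
  assumes "ring R"
    and "S \<in> maxDen_l R"
    and "is_left_loc R S A \<sigma>"
  defines "\<aa> \<equiv> ass R S"
  defines "\<pi> \<equiv> (\<lambda>r. \<aa> +>\<^bsub>R\<^esub> r)"
  shows
    \<comment> \<open>(1)\<close>
    "S = S_ass R \<aa> \<and>
     S = {r \<in> carrier R. \<pi> r \<in> S0 (R Quot \<aa>)} \<and>
     \<pi> ` S = S0 (R Quot \<aa>) \<and>
     (\<exists>\<tau>. (\<forall>r\<in>carrier R. \<tau> (\<pi> r) = \<sigma> r) \<and>
          is_left_loc (R Quot \<aa>) (S0 (R Quot \<aa>)) A \<tau>) \<and>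
     \<comment> \<open>(2)\<close>
     S0 A = Units A \<and>
     S0 A \<inter> \<sigma> ` carrier R = {\<sigma> r |r. r \<in> carrier R \<and> \<pi> r \<in> S0 (R Quot \<aa>)} \<and>
     \<comment> \<open>(3)\<close>
     S = {r \<in> carrier R. \<sigma> r \<in> Units A} \<and>
     \<comment> \<open>(4)\<close>
     Units A = generate (units_of A) (\<sigma> ` S \<union> (\<lambda>s. inv\<^bsub>A\<^esub> (\<sigma> s)) ` S) \<and>
     \<comment> \<open>(5)\<close>
     Units A = {inv\<^bsub>A\<^esub> (\<sigma> s) \<otimes>\<^bsub>A\<^esub> \<sigma> t |s t. s \<in> S \<and> t \<in> S} \<and>
     \<comment> \<open>(6)\<close>
     is_left_loc A (S0 A) A (\<lambda>x. x) \<and>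
     Ass_l A = {{\<zero>\<^bsub>A\<^esub>}} \<and>
     (\<forall>T\<in>Den_l_ass A {\<zero>\<^bsub>A\<^esub>}. T \<subseteq> Units A)"
proof -
  have rA: "ring A" using assms(3) by (simp add: is_left_loc_def)
  interpret L: LL R A S \<sigma>
    by (rule LL.intro[OF assms(1) rA LL_axioms.intro[OF assms(2) assms(3)]])
  have c2: "S = {r \<in> carrier R. ass R S +>\<^bsub>R\<^esub> r \<in> S0 (R Quot ass R S)}"
  proof -
    have i: "\<And>r. r \<in> carrier R \<Longrightarrow> ass R S +>\<^bsub>R\<^esub> r \<in> S0 (R Quot ass R S) \<longleftrightarrow> r \<in> S"
      using L.S0Q L.pi_S_iff by simp
    show ?thesis using i L.S_car by blast
  qed
  have c3: "(\<lambda>r. ass R S +>\<^bsub>R\<^esub> r) ` S = S0 (R Quot ass R S)" using L.S0Q by (rule sym)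
  have c12: "\<forall>T\<in>Den_l_ass A {\<zero>\<^bsub>A\<^esub>}. T \<subseteq> Units A"
    using L.Den_A_units unfolding Den_l_ass_def by blast
  show ?thesis
    unfolding \<aa>_def \<pi>_def
    apply (intro conjI)
               apply (rule L.S_Sass)
              apply (rule c2)
             apply (rule c3)
            apply (subst L.S0Q, rule L.tau_ex)
           apply (rule L.S0A)
          apply (rule L.S0A_img)
         apply (rule L.S_units[symmetric])
        apply (rule L.units_gen)
       apply (rule L.units_frac)
      apply (rule L.loc_A)
     apply (rule L.Ass_A)
    apply (rule c12)
    done
qed

end
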